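(* Let $\Lambda$ be a locally finite $k$-graph with no sources or sinks, let $\{s_\lambda\}$ be the universal Cuntz–Krieger $\Lambda$-family in $C^*(\Lambda)$, and let $D=\mathrm{span}\{s_\lambda s_\lambda^*:\lambda\in\Lambda\}$. For $a\in D$ and $p\in\mathbb{N}^k$, there are only finitely many $\eta\in\Lambda^p$ with $s_\eta a s_\eta^*\ne0$. Define $\Phi_p:D\to D$ by $\Phi_p(a)=\sum_{\eta\in\Lambda^p}s_\eta a s_\eta^*$. Then $\|\Phi_p(a)\|=\|a\|$ for all $a\in D$, $\Phi_p$ extends to an endomorphism (also denoted $\Phi_p$) of $\overline D$, and $p\mapsto\Phi_p$ is an action of $\mathbb{N}^k$ on $\overline D$ by endomorphisms.
   Context: A $k$-graph is a countable category $\Lambda$ with a functor $d:\Lambda\to\mathbb{N}^k$ with unique factorisation; vertices are degree-$0$ morphisms; $\Lambda^p=d^{-1}(p)$. $\Lambda$ is locally finite with no sources or sinks if for every $p\in\mathbb{N}^k$ and vertex $v$, $v\Lambda^p=\Lambda^p\cap r^{-1}(v)$ and $\Lambda^pv=\Lambda^p\cap s^{-1}(v)$ are finite and nonempty. $C^*(\Lambda)$ is the universal $C^*$-algebra generated by partial isometries $\{s_\lambda\}$ with $\{s_v\}$ mutually orthogonal projections, $s_\mu s_\nu=s_{\mu\nu}$ when $s(\mu)=r(\nu)$, $s_\mu^*s_\nu=\sum s_\xi s_\eta^*$ over pairs $(\xi,\eta)$ with $\mu\xi=\nu\eta$ of degree $d(\mu)\vee d(\nu)$, and $s_v=\sum_{\lambda\in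 v\Lambda^n}s_\lambda s_\lambda^*$ for all $v$ and $n$. $\overline D$ is the closure of $D$. *)

theory Defs
  imports "HOL-Analysis.Analysis"
begin

text \<open>Complex scalar multiplication is
provided explicitly (HOL only has real vector spaces), compatible with the
real scalar multiplication.\<close>

class cstar_algebra = real_normed_algebra + banach +
  fixes scaleC :: "complex \<Rightarrow> 'a \<Rightarrow> 'a"
    and invol :: "'a \<Rightarrow> 'a"
  assumes scaleC_add_right: "scaleC c (x + y) = scaleC c x + scaleC c y"
    and scaleC_add_left: "scaleC (b + c) x = scaleC b x + scaleC c x"
    and scaleC_scaleC: "scaleC b (scaleC c x) = scaleC (b * c) x"
    and scaleC_one: "scaleC 1 x = x"
    and scaleR_scaleC: "scaleR r x = scaleC (of_real r) x"
    and norm_scaleC: "norm (scaleC c x) = cmod c * norm x"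
    and scaleC_mult_left: "scaleC c x * y = scaleC c (x * y)"
    and scaleC_mult_right: "x * scaleC c y = scaleC c (x * y)"
    and invol_invol: "invol (invol x) = x"
    and invol_add: "invol (x + y) = invol x + invol y"
    and invol_scaleC: "invol (scaleC c x) = scaleC (cnj c) (invol x)"
    and invol_mult: "invol (x * y) = invol y * invol x"
    and cstar_identity: "norm (invol x * x) = (norm x)\<^sup>2"

definition star_hom_on :: "'a::cstar_algebra set \<Rightarrow> ('a \<Rightarrow> 'b::cstar_algebra) \<Rightarrow> bool" where
  "star_hom_on S f \<longleftrightarrow>
     (\<forall>x\<in>S. \<forall>y\<in>S. f (x + y) = f x + f y) \<and>
     (\<forall>c. \<forall>x\<in>S. f (scaleC c x) = scaleC c (f x)) \<and>
     (\<forall>x\<in>S. \<forall>y\<in>S. f (x * y) = f x * f y) \<and>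
     (\<forall>x\<in>S. f (invol x) = invol (f x))"

definition cstar_generated_by :: "'a::cstar_algebra set \<Rightarrow> bool" where
  "cstar_generated_by G \<longleftrightarrow>
     (\<forall>T. G \<subseteq> T \<and> closed T \<and> 0 \<in> T \<and>
          (\<forall>x\<in>T. \<forall>y\<in>T. x + y \<in> T \<and> x * y \<in> T) \<and>
          (\<forall>c. \<forall>x\<in>T. scaleC c x \<in> T) \<and> (\<forall>x\<in>T. invol x \<in> T)
        \<longrightarrow> T = UNIV)"

text \<open>A k-graph is given by its (countable) set of morphisms L, range and
source maps rng, src (the objects being identified with the identity
morphisms), a composition cmp (cmp mu nu is meant for src mu = rng nu), and
a degree functor d into N^k, where N^k is modelled as 'k => nat for a
finite type 'k with k = CARD('k).\<close>

definition is_kgraph ::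
  "'m set \<Rightarrow> ('m \<Rightarrow> 'm) \<Rightarrow> ('m \<Rightarrow> 'm) \<Rightarrow> ('m \<Rightarrow> 'm \<Rightarrow> 'm) \<Rightarrow> ('m \<Rightarrow> ('k::finite \<Rightarrow> nat)) \<Rightarrow> bool"
where
  "is_kgraph L rng src cmp d \<longleftrightarrow>
     countable L \<and>
     (\<forall>l\<in>L. rng l \<in> L \<and> src l \<in> L) \<and>
     (\<forall>l\<in>L. rng (rng l) = rng l \<and> src (rng l) = rng l \<and>
             rng (src l) = src l \<and> src (src l) = src l) \<and>
     (\<forall>l\<in>L. cmp (rng l) l = l \<and> cmp l (src l) = l) \<and>
     (\<forall>mu\<in>L. \<forall>nu\<in>L. src mu = rng nu \<longrightarrow>
         cmp mu nu \<in> L \<and> rng (cmp mu nu) = rng mu \<and> src (cmp mu nu) = src nu) \<and>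
     (\<forall>a\<in>L. \<forall>b\<in>L. \<forall>c\<in>L. src a = rng b \<and> src b = rng c \<longrightarrow>
         cmp (cmp a b) c = cmp a (cmp b c)) \<and>
     (\<forall>l\<in>L. d (rng l) = (\<lambda>_. 0) \<and> d (src l) = (\<lambda>_. 0)) \<and>
     (\<forall>mu\<in>L. \<forall>nu\<in>L. src mu = rng nu \<longrightarrow> d (cmp mu nu) = (\<lambda>i. d mu i + d nu i)) \<and>
     (\<forall>l\<in>L. \<forall>m n. d l = (\<lambda>i. m i + n i) \<longrightarrow>
         (\<exists>!(mu, nu). mu \<in> L \<and> nu \<in> L \<and> src mu = rng nu \<and> cmp mu nu = l \<and>
                       d mu = m \<and> d nu = n))"

definition vertices :: "'m set \<Rightarrow> ('m \<Rightarrow> ('k \<Rightarrow> nat)) \<Rightarrow> 'm set" where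
  "vertices L d = {v \<in> L. d v = (\<lambda>_. 0)}"

definition locally_finite_no_sources_sinks ::
  "'m set \<Rightarrow> ('m \<Rightarrow> 'm) \<Rightarrow> ('m \<Rightarrow> 'm) \<Rightarrow> ('m \<Rightarrow> ('k \<Rightarrow> nat)) \<Rightarrow> bool" where
  "locally_finite_no_sources_sinks L rng src d \<longleftrightarrow>
     (\<forall>v\<in>vertices L d. \<forall>p.
        finite {l \<in> L. d l = p \<and> rng l = v} \<and> {l \<in> L. d l = p \<and> rng l = v} \<noteq> {} \<and>
        finite {l \<in> L. d l = p \<and> src l = v} \<and> {l \<in> L. d l = p \<and> src l = v} \<noteq> {})"

definition min_ext ::
  "'m set \<Rightarrow> ('m \<Rightarrow> 'm) \<Rightarrow> ('m \<Rightarrow> 'm) \<Rightarrow> ('m \<Rightarrow> 'm \<Rightarrow> 'm) \<Rightarrow> ('m \<Rightarrow> ('k \<Rightarrow> nat))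
   \<Rightarrow> 'm \<Rightarrow> 'm \<Rightarrow> ('m \<times> 'm) set" where
  "min_ext L rng src cmp d mu nu =
     {(xi, eta). xi \<in> L \<and> eta \<in> L \<and> src mu = rng xi \<and> src nu = rng eta \<and>
                 cmp mu xi = cmp nu eta \<and> d (cmp mu xi) = sup (d mu) (d nu)}"

definition CK_family ::
  "'m set \<Rightarrow> ('m \<Rightarrow> 'm) \<Rightarrow> ('m \<Rightarrow> 'm) \<Rightarrow> ('m \<Rightarrow> 'm \<Rightarrow> 'm) \<Rightarrow> ('m \<Rightarrow> ('k \<Rightarrow> nat))
   \<Rightarrow> ('m \<Rightarrow> 'a::cstar_algebra) \<Rightarrow> bool" where
  "CK_family L rng src cmp d t \<longleftrightarrow>
     (\<forall>l\<in>L. t l * invol (t l) * t l = t l) \<and>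
     (\<forall>v\<in>vertices L d. invol (t v) = t v \<and> t v * t v = t v) \<and>
     (\<forall>v\<in>vertices L d. \<forall>w\<in>vertices L d. v \<noteq> w \<longrightarrow> t v * t w = 0) \<and>
     (\<forall>mu\<in>L. \<forall>nu\<in>L. src mu = rng nu \<longrightarrow> t mu * t nu = t (cmp mu nu)) \<and>
     (\<forall>mu\<in>L. \<forall>nu\<in>L. invol (t mu) * t nu =
        (\<Sum>(xi, eta)\<in>min_ext L rng src cmp d mu nu. t xi * invol (t eta))) \<and>
     (\<forall>v\<in>vertices L d. \<forall>n. t v = (\<Sum>l\<in>{l \<in> L. rng l = v \<and> d l = n}. t l * invol (t l)))"

definition universal_CK_family ::
  "'b::cstar_algebra itself \<Rightarrow> 'm set \<Rightarrow> ('m \<Rightarrow> 'm) \<Rightarrow> ('m \<Rightarrow> 'm) \<Rightarrow> ('m \<Rightarrow> 'm \<Rightarrow> 'm)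
   \<Rightarrow> ('m \<Rightarrow> ('k \<Rightarrow> nat)) \<Rightarrow> ('m \<Rightarrow> 'a::cstar_algebra) \<Rightarrow> bool" where
  "universal_CK_family (_ :: 'b itself) L rng src cmp d s \<longleftrightarrow>
     CK_family L rng src cmp d s \<and>
     cstar_generated_by (s ` L) \<and>
     (\<forall>t :: 'm \<Rightarrow> 'b. CK_family L rng src cmp d t \<longrightarrow>
        (\<exists>pi. star_hom_on UNIV pi \<and> (\<forall>l\<in>L. pi (s l) = t l)))"

definition diag_span ::
  "'m set \<Rightarrow> ('m \<Rightarrow> 'a::cstar_algebra) \<Rightarrow> 'a set" where
  "diag_span L s = {(\<Sum>l\<in>F. scaleC (c l) (s l * invol (s l))) | F c. finite F \<and> F \<subseteq> L}"

text \<open>Phi_p(a) = sum over eta in Lambda^p of s_eta a s_eta^* (only the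
finitely many nonzero terms are summed).\<close>
definition Phi ::
  "'m set \<Rightarrow> ('m \<Rightarrow> ('k \<Rightarrow> nat)) \<Rightarrow> ('m \<Rightarrow> 'a::cstar_algebra) \<Rightarrow> ('k \<Rightarrow> nat) \<Rightarrow> 'a \<Rightarrow> 'a" where
  "Phi L d s p a = (\<Sum>eta\<in>{eta \<in> L. d eta = p \<and> s eta * a * invol (s eta) \<noteq> 0}.
                      s eta * a * invol (s eta))"

end

theory Submission
  imports Defs
begin


context cstar_algebra begin

lemma invol_zero[simp]: "invol 0 = 0"
  using invol_add[of 0 0] by (metis add_cancel_right_right)

lemma invol_minus: "invol (- x) = - invol x"
proof -
  have "invol x + invol (-x) = 0" using invol_add[of x "-x"] by simp
  then show ?thesis using minus_unique by metis
qed

lemma invol_diff: "invol (x - y) = invol x - invol y"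
  by (metis diff_conv_add_uminus invol_add invol_minus)

lemma invol_sum: "invol (sum f A) = sum (\<lambda>i. invol (f i)) A"
  by (induction A rule: infinite_finite_induct) (auto simp: invol_add)

lemma scaleC_zero[simp]: "scaleC c 0 = 0"
  using norm_scaleC[of c 0] by simp

lemma scaleC_zero_left[simp]: "scaleC 0 x = 0"
  using norm_scaleC[of 0 x] by simp

lemma scaleC_minus: "scaleC c (- x) = - scaleC c x"
proof -
  have "scaleC c x + scaleC c (-x) = 0" using scaleC_add_right[of c x "-x"] by simp
  then show ?thesis using minus_unique by metis
qed

lemma scaleC_diff: "scaleC c (x - y) = scaleC c x - scaleC c y"
  by (metis diff_conv_add_uminus scaleC_add_right scaleC_minus)

lemma scaleC_sum: "scaleC c (sum f A) = sum (\<lambda>i. scaleC c (f i)) A"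
  by (induction A rule: infinite_finite_induct) (auto simp: scaleC_add_right)

lemma norm_invol: "norm (invol x) = norm x"
proof -
  have le: "norm y \<le> norm (invol y)" for y
  proof (cases "y = 0")
    case True then show ?thesis by simp
  next
    case False
    have "(norm y)^2 \<le> norm (invol y) * norm y"
      using cstar_identity[of y] norm_mult_ineq[of "invol y" y] by simp
    then show ?thesis using False by (simp add: power2_eq_square)
  qed
  show ?thesis using le[of x] le[of "invol x"] by (simp add: invol_invol)
qed

lemma proj_norm_le1:
  assumes "invol p = p" "p * p = p"
  shows "norm p \<le> 1"
proof -
  have "norm p ^2 = norm p" using cstar_identity[of p] assms by simp
  then have "norm p * norm p = norm p * 1" by (simp add: power2_eq_square)
  then have "norm p = 0 \<or> norm p = 1" by (metis mult_left_cancel)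
  then show ?thesis by linarith
qed

lemma pisom_norm_le1:
  assumes "invol x * x = p" "invol p = p" "p * p = p"
  shows "norm x \<le> 1"
proof -
  have "norm x ^ 2 \<le> 1" using cstar_identity[of x] proj_norm_le1[OF assms(2,3)] assms(1) by simp
  then have "norm x ^ 2 \<le> 1 ^ 2" by simp
  then show ?thesis by (rule power2_le_imp_le) simp
qed

end

lemma bounded_linear_scaleC: "bounded_linear (scaleC c :: 'a::cstar_algebra \<Rightarrow> 'a)"
proof (rule bounded_linear_intro[where K="cmod c"])
  show "scaleC c (x + y) = scaleC c x + scaleC c y" for x y :: 'a by (rule scaleC_add_right)
  show "scaleC c (scaleR r x) = scaleR r (scaleC c x)" for r and x :: 'a
    by (simp add: scaleR_scaleC scaleC_scaleC mult.commute)
  show "norm (scaleC c x) \<le> norm x * cmod c" for x :: 'a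
    by (simp add: norm_scaleC mult.commute)
qed

lemma bounded_linear_invol: "bounded_linear (invol :: 'a::cstar_algebra \<Rightarrow> 'a)"
proof (rule bounded_linear_intro[where K=1])
  show "invol (x + y) = invol x + invol y" for x y :: 'a by (rule invol_add)
  show "invol (scaleR r x) = scaleR r (invol x)" for r and x :: 'a
    by (simp add: scaleR_scaleC invol_scaleC)
  show "norm (invol x) \<le> norm x * 1" for x :: 'a
    by (simp add: norm_invol)
qed




fun pw :: "nat \<Rightarrow> 'a::cstar_algebra \<Rightarrow> 'a" where
  "pw 0 x = x"
| "pw (Suc k) x = pw k x * pw k x"

lemma pw_add:
  fixes u w :: "'a::cstar_algebra"
  assumes "u * w = 0" "w * u = 0"
  shows "pw k (u + w) = pw k u + pw k w \<and> pw k u * pw k w = 0 \<and> pw k w * pw k u = 0"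
proof (induction k)
  case 0
  then show ?case using assms by simp
next
  case (Suc k)
  then have a: "pw k u * pw k w = 0" "pw k w * pw k u = 0" "pw k (u + w) = pw k u + pw k w" by auto
  have "pw (Suc k) (u + w) = (pw k u + pw k w) * (pw k u + pw k w)" using a by simp
  also have "\<dots> = pw k u * pw k u + pw k u * pw k w + (pw k w * pw k u + pw k w * pw k w)"
    by (simp add: algebra_simps)
  also have "\<dots> = pw (Suc k) u + pw (Suc k) w" using a by simp
  finally have 1: "pw (Suc k) (u + w) = pw (Suc k) u + pw (Suc k) w" .
  have 2: "pw (Suc k) u * pw (Suc k) w = 0"
  proof -
    have "pw (Suc k) u * pw (Suc k) w = pw k u * (pw k u * pw k w) * pw k w"
      by (simp add: mult.assoc)
    then show ?thesis using a by simp
  qed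
  have 3: "pw (Suc k) w * pw (Suc k) u = 0"
  proof -
    have "pw (Suc k) w * pw (Suc k) u = pw k w * (pw k w * pw k u) * pw k u"
      by (simp add: mult.assoc)
    then show ?thesis using a by simp
  qed
  show ?case using 1 2 3 by blast
qed

lemma pw_sum:
  fixes h :: "'i \<Rightarrow> 'a::cstar_algebra"
  assumes "finite I" "\<And>i j. i \<in> I \<Longrightarrow> j \<in> I \<Longrightarrow> i \<noteq> j \<Longrightarrow> h i * h j = 0"
  shows "pw k (sum h I) = (\<Sum>i\<in>I. pw k (h i))"
  using assms
proof (induction I rule: finite_induct)
  case empty
  have "pw k 0 = (0::'a)" by (induction k) auto
  then show ?case by simp
next
  case (insert j A)
  have "h j * sum h A = 0" using insert by (auto simp: sum_distrib_left intro!: sum.neutral)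
  moreover have "sum h A * h j = 0" using insert by (auto simp: sum_distrib_right intro!: sum.neutral)
  ultimately have "pw k (h j + sum h A) = pw k (h j) + pw k (sum h A)" using pw_add by blast
  then show ?case using insert by simp
qed

lemma pw_sa:
  fixes h :: "'a::cstar_algebra"
  assumes "invol h = h"
  shows "invol (pw k h) = pw k h \<and> norm (pw k h) = norm h ^ (2^k)"
proof (induction k)
  case 0
  then show ?case using assms by simp
next
  case (Suc k)
  then have a: "invol (pw k h) = pw k h" "norm (pw k h) = norm h ^ (2^k)" by auto
  have "invol (pw (Suc k) h) = pw (Suc k) h" using a by (simp add: invol_mult)
  moreover have "norm (pw (Suc k) h) = norm h ^ (2 ^ Suc k)"
  proof -
    have "norm (pw (Suc k) h) = norm (invol (pw k h) * pw k h)" using a by simp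
    also have "\<dots> = (norm h ^ (2^k))^2" using cstar_identity[of "pw k h"] a by simp
    also have "\<dots> = norm h ^ (2 ^ Suc k)" by (simp add: power_mult[symmetric] mult.commute)
    finally show ?thesis .
  qed
  ultimately show ?case by blast
qed

lemma real_pow_bound:
  fixes a b N :: real
  assumes "b < a" "0 \<le> b" "\<And>k. a ^ (2^k) \<le> N * b ^ (2^k)"
  shows False
proof (cases "b = 0")
  case True
  then show ?thesis using assms(1) assms(3)[of 0] by simp
next
  case False
  then have b: "b > 0" using assms by simp
  then have r: "a / b > 1" using assms by simp
  obtain n where n: "N < (a/b)^n" using real_arch_pow[OF r] by blast
  have "n \<le> 2^n" by (simp add: less_imp_le)
  then have "(a/b)^n \<le> (a/b)^(2^n)" using r by (intro power_increasing) auto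
  also have "\<dots> = a^(2^n) / b^(2^n)" by (simp add: power_divide)
  also have "\<dots> \<le> N" using assms(3)[of n] b by (simp add: divide_le_eq)
  finally show False using n by simp
qed

lemma orth_norm:
  fixes x :: "'i \<Rightarrow> 'a::cstar_algebra"
  assumes fin: "finite I" and M: "0 \<le> M" and bd: "\<And>i. i \<in> I \<Longrightarrow> norm (x i) \<le> M"
    and orth: "\<And>i j. i \<in> I \<Longrightarrow> j \<in> I \<Longrightarrow> i \<noteq> j \<Longrightarrow> invol (x i) * x j = 0 \<and> x i * invol (x j) = 0"
  shows "norm (sum x I) \<le> M"
proof (rule ccontr)
  assume c: "\<not> norm (sum x I) \<le> M"
  define y where "y = sum x I"
  define h where "h i = invol (x i) * x i" for i
  have hy: "invol y * y = sum h I"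
  proof -
    have "invol y * y = (\<Sum>i\<in>I. \<Sum>j\<in>I. invol (x i) * x j)"
      unfolding y_def invol_sum sum_product by simp
    also have "\<dots> = (\<Sum>i\<in>I. h i)"
    proof (rule sum.cong[OF refl])
      fix i assume i: "i \<in> I"
      have "(\<Sum>j\<in>I. invol (x i) * x j) = (\<Sum>j\<in>I. if j = i then h i else 0)"
        using orth i by (intro sum.cong) (auto simp: h_def)
      also have "\<dots> = h i" using i fin by simp
      finally show "(\<Sum>j\<in>I. invol (x i) * x j) = h i" .
    qed
    finally show ?thesis .
  qed
  have hh: "h i * h j = 0" if "i \<in> I" "j \<in> I" "i \<noteq> j" for i j
  proof -
    have "h i * h j = invol (x i) * (x i * invol (x j)) * x j" by (simp add: h_def mult.assoc)
    then show ?thesis using orth that by simp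
  qed
  have hsa: "invol (h i) = h i" for i by (simp add: h_def invol_mult invol_invol)
  have ysa: "invol (sum h I) = sum h I" by (simp add: invol_sum hsa)
  have hn: "norm (h i) \<le> M^2" if "i \<in> I" for i
    using cstar_identity[of "x i"] bd[OF that] by (simp add: h_def power_mono)
  have "(norm y ^ 2) ^ (2^k) \<le> real (card I) * (M^2) ^ (2^k)" for k
  proof -
    have "(norm y ^ 2) ^ (2^k) = norm (pw k (sum h I))"
      using pw_sa[OF ysa, of k] hy cstar_identity[of y] by simp
    also have "\<dots> = norm (\<Sum>i\<in>I. pw k (h i))" using pw_sum[OF fin, of h k] hh by simp
    also have "\<dots> \<le> (\<Sum>i\<in>I. norm (pw k (h i)))" by (rule norm_sum)
    also have "\<dots> = (\<Sum>i\<in>I. norm (h i) ^ (2^k))" using pw_sa[OF hsa] by simp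
    also have "\<dots> \<le> (\<Sum>i\<in>I. (M^2) ^ (2^k))"
      using hn by (intro sum_mono power_mono) auto
    also have "\<dots> = real (card I) * (M^2) ^ (2^k)" by simp
    finally show ?thesis .
  qed
  moreover have "M^2 < norm y ^ 2" using c M unfolding y_def by (simp add: power_strict_mono)
  ultimately show False using real_pow_bound[of "M^2" "norm y ^ 2" "real (card I)"] by simp
qed



locale kg =
  fixes L :: "'m set" and rng src :: "'m \<Rightarrow> 'm" and cmp :: "'m \<Rightarrow> 'm \<Rightarrow> 'm"
    and d :: "'m \<Rightarrow> ('k::finite \<Rightarrow> nat)" and s :: "'m \<Rightarrow> 'a::cstar_algebra"
  assumes kgr: "is_kgraph L rng src cmp d"
    and lf: "locally_finite_no_sources_sinks L rng src d"
    and ck: "CK_family L rng src cmp d s"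
begin

lemma L_rng: "l \<in> L \<Longrightarrow> rng l \<in> L" and L_src: "l \<in> L \<Longrightarrow> src l \<in> L"
  using kgr unfolding is_kgraph_def by auto

lemma rr: "l \<in> L \<Longrightarrow> rng (rng l) = rng l" and sr: "l \<in> L \<Longrightarrow> src (rng l) = rng l"
  and rs: "l \<in> L \<Longrightarrow> rng (src l) = src l" and ss: "l \<in> L \<Longrightarrow> src (src l) = src l"
  using kgr unfolding is_kgraph_def by auto

lemma cmp_rng: "l \<in> L \<Longrightarrow> cmp (rng l) l = l" and cmp_src: "l \<in> L \<Longrightarrow> cmp l (src l) = l"
  using kgr unfolding is_kgraph_def by auto

lemma cmp_L: "mu \<in> L \<Longrightarrow> nu \<in> L \<Longrightarrow> src mu = rng nu \<Longrightarrow> cmp mu nu \<in> L"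
  and rng_cmp: "mu \<in> L \<Longrightarrow> nu \<in> L \<Longrightarrow> src mu = rng nu \<Longrightarrow> rng (cmp mu nu) = rng mu"
  and src_cmp: "mu \<in> L \<Longrightarrow> nu \<in> L \<Longrightarrow> src mu = rng nu \<Longrightarrow> src (cmp mu nu) = src nu"
  using kgr unfolding is_kgraph_def by auto

lemma d_rng: "l \<in> L \<Longrightarrow> d (rng l) = (\<lambda>_. 0)" and d_src: "l \<in> L \<Longrightarrow> d (src l) = (\<lambda>_. 0)"
  using kgr unfolding is_kgraph_def by auto

lemma d_cmp: "mu \<in> L \<Longrightarrow> nu \<in> L \<Longrightarrow> src mu = rng nu \<Longrightarrow> d (cmp mu nu) = (\<lambda>i. d mu i + d nu i)"
  using kgr unfolding is_kgraph_def by auto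

lemma fact_ex1: "l \<in> L \<Longrightarrow> d l = (\<lambda>i. m i + n i) \<Longrightarrow>
   (\<exists>!(mu, nu). mu \<in> L \<and> nu \<in> L \<and> src mu = rng nu \<and> cmp mu nu = l \<and> d mu = m \<and> d nu = n)"
  using kgr unfolding is_kgraph_def by blast

lemma fact_ex:
  assumes "l \<in> L" "d l = (\<lambda>i. m i + n i)"
  obtains mu nu where "mu \<in> L" "nu \<in> L" "src mu = rng nu" "cmp mu nu = l" "d mu = m" "d nu = n"
  using fact_ex1[OF assms] by auto

lemma fact_uniq:
  assumes "a \<in> L" "b \<in> L" "a' \<in> L" "b' \<in> L" "src a = rng b" "src a' = rng b'"
    "cmp a b = cmp a' b'" "d a = d a'" "d b = d b'"
  shows "a = a' \<and> b = b'"
proof -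
  have l: "cmp a b \<in> L" using assms cmp_L by blast
  have "d (cmp a b) = (\<lambda>i. d a i + d b i)" using assms d_cmp by blast
  from fact_ex1[OF l this] assms show ?thesis by (auto simp: Ex1_def)
qed

lemma deg0: assumes "l \<in> L" "d l = (\<lambda>_. 0)" shows "rng l = l"
proof -
  have "rng l = l \<and> l = src l"
    by (rule fact_uniq) (use assms L_rng L_src sr rs cmp_rng cmp_src d_rng d_src in auto)
  then show ?thesis by simp
qed

lemma vert_iff: "v \<in> vertices L d \<longleftrightarrow> v \<in> L \<and> d v = (\<lambda>_. 0)"
  by (simp add: vertices_def)

lemma rng_vert: "l \<in> L \<Longrightarrow> rng l \<in> vertices L d" and src_vert: "l \<in> L \<Longrightarrow> src l \<in> vertices L d"
  by (auto simp: vert_iff L_rng L_src d_rng d_src)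

lemma vert_rng: "v \<in> vertices L d \<Longrightarrow> rng v = v"
  using deg0 by (auto simp: vert_iff)
lemma vert_src: "v \<in> vertices L d \<Longrightarrow> src v = v"
  by (metis deg0 sr vert_iff)

lemma fin_in: "v \<in> vertices L d \<Longrightarrow> finite {l \<in> L. d l = p \<and> src l = v}"
  and ne_in: "v \<in> vertices L d \<Longrightarrow> {l \<in> L. d l = p \<and> src l = v} \<noteq> {}"
  using lf unfolding locally_finite_no_sources_sinks_def by auto

lemma ck_v: "v \<in> vertices L d \<Longrightarrow> invol (s v) = s v" "v \<in> vertices L d \<Longrightarrow> s v * s v = s v"
  using ck unfolding CK_family_def by auto

lemma ck_orth: "v \<in> vertices L d \<Longrightarrow> w \<in> vertices L d \<Longrightarrow> v \<noteq> w \<Longrightarrow> s v * s w = 0"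
  using ck unfolding CK_family_def by auto

lemma ck_mult: "mu \<in> L \<Longrightarrow> nu \<in> L \<Longrightarrow> src mu = rng nu \<Longrightarrow> s mu * s nu = s (cmp mu nu)"
  using ck unfolding CK_family_def by auto

lemma ck_star: "mu \<in> L \<Longrightarrow> nu \<in> L \<Longrightarrow> invol (s mu) * s nu =
        (\<Sum>(xi, eta)\<in>min_ext L rng src cmp d mu nu. s xi * invol (s eta))"
  using ck unfolding CK_family_def by auto

lemma min_ext_deg:
  assumes "mu \<in> L" "nu \<in> L" "d mu = d nu" "(xi, chi) \<in> min_ext L rng src cmp d mu nu"
  shows "xi = src mu \<and> chi = src nu \<and> mu = nu"
proof -
  have m: "xi \<in> L" "chi \<in> L" "src mu = rng xi" "src nu = rng chi" "cmp mu xi = cmp nu chi"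
    "d (cmp mu xi) = sup (d mu) (d nu)"
    using assms(4) unfolding min_ext_def by auto
  have "d (cmp mu xi) = (\<lambda>i. d mu i + d xi i)" using d_cmp m assms by blast
  then have "d xi = (\<lambda>_. 0)" using m(6) assms(3)
    by (auto simp: fun_eq_iff)
  then have x: "xi = src mu" using deg0 m by metis
  have "d (cmp nu chi) = (\<lambda>i. d nu i + d chi i)" using d_cmp m assms by blast
  then have "d chi = (\<lambda>_. 0)" using m(5,6) assms(3)
    by (auto simp: fun_eq_iff)
  then have c: "chi = src nu" using deg0 m by metis
  have "mu = nu" using m(5) x c cmp_src assms by metis
  then show ?thesis using x c by blast
qed

lemma star_self: assumes "l \<in> L" shows "invol (s l) * s l = s (src l)"
proof -
  have "min_ext L rng src cmp d l l = {(src l, src l)}"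
  proof
    show "min_ext L rng src cmp d l l \<subseteq> {(src l, src l)}" using min_ext_deg assms by fast
    show "{(src l, src l)} \<subseteq> min_ext L rng src cmp d l l"
      using assms L_src rs cmp_src by (auto simp: min_ext_def)
  qed
  then show ?thesis using ck_star[OF assms assms] ck_v src_vert assms by simp
qed

lemma star_orth: assumes "mu \<in> L" "nu \<in> L" "d mu = d nu" "mu \<noteq> nu" shows "invol (s mu) * s nu = 0"
proof -
  have "min_ext L rng src cmp d mu nu = {}" using min_ext_deg assms by fast
  then show ?thesis using ck_star assms by simp
qed

lemma s_src: "l \<in> L \<Longrightarrow> s l * s (src l) = s l"
  using ck_mult[of l "src l"] L_src rs cmp_src by simp

lemma s_rng: "l \<in> L \<Longrightarrow> s (rng l) * s l = s l"
  using ck_mult[of "rng l" l] L_rng sr cmp_rng by simp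

lemma s_mult0: assumes "mu \<in> L" "nu \<in> L" "src mu \<noteq> rng nu" shows "s mu * s nu = 0"
proof -
  have "s mu * s nu = (s mu * s (src mu)) * (s (rng nu) * s nu)"
    using s_src s_rng assms by simp
  also have "\<dots> = s mu * (s (src mu) * s (rng nu)) * s nu" by (simp add: mult.assoc)
  finally have "s mu * s nu = s mu * (s (src mu) * s (rng nu)) * s nu" .
  then show ?thesis using ck_orth src_vert rng_vert assms by simp
qed

lemma norm_s: "l \<in> L \<Longrightarrow> norm (s l) \<le> 1"
  using pisom_norm_le1[OF star_self] ck_v src_vert by blast

lemma norm_is: "l \<in> L \<Longrightarrow> norm (invol (s l)) \<le> 1"
  using norm_s by (simp add: norm_invol)

end


lemma scaleC_m1: "scaleC (-1) (x::'a::cstar_algebra) = - x"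
proof -
  have "scaleC (-1) x + x = 0"
    using scaleC_add_left[of "-1" 1 x] by (simp add: scaleC_one)
  then show ?thesis by (metis add.commute minus_unique)
qed

context kg begin

abbreviation Q where "Q l \<equiv> s l * invol (s l)"
abbreviation DD where "DD \<equiv> diag_span L s"

lemma D_rep: assumes "a \<in> DD"
  obtains F c where "finite F" "F \<subseteq> L" "a = (\<Sum>l\<in>F. scaleC (c l) (Q l))"
  using assms unfolding diag_span_def by blast

lemma D_zero: "0 \<in> DD"
  unfolding diag_span_def by (rule CollectI, rule exI[of _ "{}"]) auto

lemma D_Q: "l \<in> L \<Longrightarrow> Q l \<in> DD"
  unfolding diag_span_def
  by (rule CollectI, rule exI[of _ "{l}"], rule exI[of _ "\<lambda>_. 1"]) (auto simp: scaleC_one)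

lemma D_add: assumes "a \<in> DD" "b \<in> DD" shows "a + b \<in> DD"
proof -
  obtain F c where F: "finite F" "F \<subseteq> L" "a = (\<Sum>l\<in>F. scaleC (c l) (Q l))" using D_rep assms(1) by blast
  obtain G e where G: "finite G" "G \<subseteq> L" "b = (\<Sum>l\<in>G. scaleC (e l) (Q l))" using D_rep assms(2) by blast
  define f where "f l = (if l \<in> F then c l else 0) + (if l \<in> G then e l else 0)" for l
  have 1: "(\<Sum>l\<in>F\<union>G. scaleC (if l \<in> F then c l else 0) (Q l)) = a"
    unfolding F(3) by (rule sum.mono_neutral_cong_right) (use F G in auto)
  have 2: "(\<Sum>l\<in>F\<union>G. scaleC (if l \<in> G then e l else 0) (Q l)) = b"
    unfolding G(3) by (rule sum.mono_neutral_cong_right) (use F G in auto)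
  have "a + b = (\<Sum>l\<in>F\<union>G. scaleC (f l) (Q l))"
    unfolding f_def scaleC_add_left sum.distrib 1 2 ..
  then show ?thesis unfolding diag_span_def using F G by blast
qed

lemma D_scale: assumes "a \<in> DD" shows "scaleC z a \<in> DD"
proof -
  obtain F c where F: "finite F" "F \<subseteq> L" "a = (\<Sum>l\<in>F. scaleC (c l) (Q l))" using D_rep assms(1) by blast
  have "scaleC z a = (\<Sum>l\<in>F. scaleC (z * c l) (Q l))"
    unfolding F(3) scaleC_sum scaleC_scaleC ..
  then show ?thesis unfolding diag_span_def mem_Collect_eq
    by (intro exI[of _ F] exI[of _ "\<lambda>l. z * c l"]) (use F(1,2) in simp)
qed

lemma D_sum: "finite A \<Longrightarrow> (\<And>i. i \<in> A \<Longrightarrow> f i \<in> DD) \<Longrightarrow> sum f A \<in> DD"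
  by (induction A rule: finite_induct) (auto intro: D_zero D_add)

lemma D_diff: "a \<in> DD \<Longrightarrow> b \<in> DD \<Longrightarrow> a - b \<in> DD"
  using D_add[of a "scaleC (-1) b"] D_scale[of b "-1"] by (simp add: scaleC_m1)

lemma sQs: assumes "e \<in> L" "l \<in> L"
  shows "s e * Q l * invol (s e) = (if src e = rng l then Q (cmp e l) else 0)"
proof (cases "src e = rng l")
  case True
  have "s e * Q l * invol (s e) = (s e * s l) * invol (s e * s l)"
    by (simp add: invol_mult mult.assoc)
  then show ?thesis using True ck_mult assms by simp
next
  case False
  then show ?thesis using s_mult0 assms by (simp add: mult.assoc[symmetric])
qed

lemma conj_expand:
  "s e * (\<Sum>l\<in>F. scaleC (c l) (Q l)) * invol (s e) = (\<Sum>l\<in>F. scaleC (c l) (s e * Q l * invol (s e)))"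
  by (simp add: sum_distrib_left sum_distrib_right scaleC_mult_left scaleC_mult_right)

definition vb where "vb a V \<longleftrightarrow> (\<forall>e\<in>L. src e \<notin> V \<longrightarrow> s e * a = 0 \<and> a * invol (s e) = 0)"

lemma vb_mono: "vb a V \<Longrightarrow> V \<subseteq> W \<Longrightarrow> vb a W"
  unfolding vb_def by blast

lemma vb_add: "vb a V \<Longrightarrow> vb b V \<Longrightarrow> vb (a + b) V"
  unfolding vb_def by (simp add: distrib_left distrib_right)

lemma vb_scale: "vb a V \<Longrightarrow> vb (scaleC z a) V"
  unfolding vb_def by (simp add: scaleC_mult_left scaleC_mult_right)

lemma vb_invol: "vb a V \<Longrightarrow> vb (invol a) V"
proof -
  assume a: "vb a V"
  { fix e assume "e \<in> L" "src e \<notin> V"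
    then have "s e * a = 0" "a * invol (s e) = 0" using a unfolding vb_def by auto
    then have "s e * invol a = 0 \<and> invol a * invol (s e) = 0"
      using invol_mult[of a "invol (s e)"] invol_mult[of "s e" a] by (simp add: invol_invol)
  }
  then show ?thesis unfolding vb_def by blast
qed

lemma vb_mult: "vb a V \<Longrightarrow> vb b V \<Longrightarrow> vb (a * b) V"
  unfolding vb_def by (simp add: mult.assoc[symmetric]) (simp add: mult.assoc)

lemma Q_vb: assumes "l \<in> L" shows "vb (Q l) {rng l}"
  unfolding vb_def
proof (intro ballI impI)
  fix e assume e: "e \<in> L" "src e \<notin> {rng l}"
  then have 0: "s e * s l = 0" using s_mult0 assms by auto
  then have "s e * Q l = 0" by (simp add: mult.assoc[symmetric])
  moreover have "Q l * invol (s e) = 0"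
    using 0 by (simp add: mult.assoc invol_mult[symmetric])
  ultimately show "s e * Q l = 0 \<and> Q l * invol (s e) = 0" by blast
qed

lemma vsum_Q: assumes "l \<in> L" "finite V" "V \<subseteq> vertices L d" "rng l \<in> V"
  shows "(\<Sum>v\<in>V. s v * Q l * s v) = Q l"
proof -
  have "(\<Sum>v\<in>V. s v * Q l * s v) = (\<Sum>v\<in>V. if v = rng l then Q l else 0)"
  proof (rule sum.cong[OF refl])
    fix v assume v: "v \<in> V"
    then have vv: "v \<in> vertices L d" "v \<in> L" using assms by (auto simp: vert_iff)
    have "s v * Q l * s v = s v * Q l * invol (s v)" using ck_v vv by simp
    also have "\<dots> = (if v = rng l then Q l else 0)"
      using sQs[OF vv(2) assms(1)] vert_src[OF vv(1)] cmp_rng[OF assms(1)] by auto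
    finally show "s v * Q l * s v = (if v = rng l then Q l else 0)" .
  qed
  also have "\<dots> = Q l" using assms by simp
  finally show ?thesis .
qed

lemma Q_comm: assumes "l \<in> L" "v \<in> vertices L d" shows "Q l * s v = s v * Q l"
proof (cases "v = rng l")
  case True
  have "s v * Q l = Q l" using True s_rng assms by (simp add: mult.assoc[symmetric])
  moreover have "Q l * s v = Q l"
  proof -
    have "Q l * s v = s l * invol (s v * s l)" using ck_v assms by (simp add: invol_mult mult.assoc)
    then show ?thesis using True s_rng assms by simp
  qed
  ultimately show ?thesis by simp
next
  case False
  have vL: "v \<in> L" using assms by (simp add: vert_iff)
  have 0: "s v * s l = 0" using s_mult0[OF vL assms(1)] vert_src[OF assms(2)] False by simp
  then have "s v * Q l = 0" by (simp add: mult.assoc[symmetric])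
  moreover have "Q l * s v = 0"
  proof -
    have "Q l * s v = s l * invol (s v * s l)" using ck_v assms by (simp add: invol_mult mult.assoc)
    then show ?thesis using 0 by simp
  qed
  ultimately show ?thesis by simp
qed

lemma vb_sumQ: "finite F \<Longrightarrow> F \<subseteq> L \<Longrightarrow> rng ` F \<subseteq> W \<Longrightarrow> vb (\<Sum>l\<in>F. scaleC (c l) (Q l)) W"
proof (induction F rule: finite_induct)
  case empty
  then show ?case by (simp add: vb_def)
next
  case (insert l F)
  have "vb (Q l) W" using Q_vb[of l] insert by (auto intro: vb_mono)
  then have "vb (scaleC (c l) (Q l)) W" by (rule vb_scale)
  moreover have "vb (\<Sum>l\<in>F. scaleC (c l) (Q l)) W" using insert by auto
  ultimately show ?case using insert by (simp add: vb_add)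
qed

lemma D_facts: assumes "a \<in> DD"
  obtains V where "finite V" "V \<subseteq> vertices L d" "vb a V" "a = (\<Sum>v\<in>V. s v * a * s v)"
proof -
  obtain F c where F: "finite F" "F \<subseteq> L" "a = (\<Sum>l\<in>F. scaleC (c l) (Q l))" using D_rep assms(1) by blast
  let ?V = "rng ` F"
  have V: "finite ?V" "?V \<subseteq> vertices L d" using F rng_vert by auto
  have "vb (\<Sum>l\<in>F. scaleC (c l) (Q l)) ?V"
    using vb_sumQ F by blast
  with F have vb: "vb a ?V" by simp
  have "(\<Sum>v\<in>?V. s v * a * s v) = (\<Sum>v\<in>?V. \<Sum>l\<in>F. scaleC (c l) (s v * Q l * s v))"
    unfolding F(3) by (simp add: sum_distrib_left sum_distrib_right scaleC_mult_left scaleC_mult_right)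
  also have "\<dots> = (\<Sum>l\<in>F. scaleC (c l) (\<Sum>v\<in>?V. s v * Q l * s v))"
    by (subst sum.swap) (simp add: scaleC_sum)
  also have "\<dots> = a" unfolding F(3) using vsum_Q V F by (intro sum.cong) auto
  finally show ?thesis using that V vb by metis
qed

lemma D_comm: assumes "a \<in> DD" "v \<in> vertices L d" shows "a * s v = s v * a"
proof -
  obtain F c where F: "finite F" "F \<subseteq> L" "a = (\<Sum>l\<in>F. scaleC (c l) (Q l))" using D_rep assms(1) by blast
  show ?thesis unfolding F(3) using Q_comm F assms
    by (simp add: sum_distrib_left sum_distrib_right scaleC_mult_left scaleC_mult_right subset_iff)
qed

end


context kg begin

definition Sp where "Sp p V = {e \<in> L. d e = p \<and> src e \<in> V}"

lemma finite_Sp: assumes "finite V" "V \<subseteq> vertices L d" shows "finite (Sp p V)"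
proof -
  have "Sp p V = (\<Union>v\<in>V. {l \<in> L. d l = p \<and> src l = v})" unfolding Sp_def by blast
  moreover have "finite (\<Union>v\<in>V. {l \<in> L. d l = p \<and> src l = v})"
    using assms fin_in by blast
  ultimately show ?thesis by simp
qed

lemma D_ex: assumes "a \<in> DD"
  shows "\<exists>V. finite V \<and> V \<subseteq> vertices L d \<and> vb a V \<and> a = (\<Sum>v\<in>V. s v * a * s v)"
  by (rule D_facts[OF assms]) blast

lemma supp_sub: assumes "vb a V"
  shows "{e \<in> L. d e = p \<and> s e * a * invol (s e) \<noteq> 0} \<subseteq> Sp p V"
proof
  fix e assume e: "e \<in> {e \<in> L. d e = p \<and> s e * a * invol (s e) \<noteq> 0}"
  have "src e \<in> V"
  proof (rule ccontr)
    assume "src e \<notin> V"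
    then have "s e * a = 0" using assms e unfolding vb_def by blast
    then show False using e by simp
  qed
  then show "e \<in> Sp p V" using e unfolding Sp_def by blast
qed

lemma Phi_vb: assumes "finite V" "V \<subseteq> vertices L d" "vb a V"
  shows "Phi L d s p a = (\<Sum>e\<in>Sp p V. s e * a * invol (s e))"
  unfolding Phi_def
  by (rule sum.mono_neutral_left[OF finite_Sp[OF assms(1,2)] supp_sub[OF assms(3)]]) (auto simp: Sp_def)

lemma supp_finite: assumes "a \<in> DD" shows "finite {e \<in> L. d e = p \<and> s e * a * invol (s e) \<noteq> 0}"
proof -
  obtain V where V: "finite V" "V \<subseteq> vertices L d" "vb a V" using D_ex[OF assms] by blast
  show ?thesis using finite_Sp[OF V(1,2)] supp_sub[OF V(3)] by (rule finite_subset[rotated])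
qed

lemma Phi_DD: assumes "a \<in> DD" shows "Phi L d s p a \<in> DD"
proof -
  obtain F c where F: "finite F" "F \<subseteq> L" "a = (\<Sum>l\<in>F. scaleC (c l) (Q l))" using D_rep assms(1) by blast
  have V: "finite (rng ` F)" "rng ` F \<subseteq> vertices L d" using F rng_vert by auto
  have vb: "vb a (rng ` F)" using vb_sumQ F by blast
  have "Phi L d s p a = (\<Sum>e\<in>Sp p (rng ` F). \<Sum>l\<in>F. scaleC (c l) (s e * Q l * invol (s e)))"
    unfolding Phi_vb[OF V vb] unfolding F(3) conj_expand ..
  also have "\<dots> \<in> DD"
  proof (rule D_sum[OF finite_Sp[OF V]], rule D_sum[OF F(1)], rule D_scale)
    fix e l assume "e \<in> Sp p (rng ` F)" "l \<in> F"
    then have el: "e \<in> L" "l \<in> L" using F by (auto simp: Sp_def)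
    show "s e * Q l * invol (s e) \<in> DD"
      unfolding sQs[OF el] using D_Q D_zero cmp_L el by auto
  qed
  finally show ?thesis .
qed

lemma DD_common: assumes "a \<in> DD" "b \<in> DD"
  obtains V where "finite V" "V \<subseteq> vertices L d" "vb a V" "vb b V"
proof -
  obtain Va where A: "finite Va" "Va \<subseteq> vertices L d" "vb a Va" using D_ex[OF assms(1)] by blast
  obtain Vb where B: "finite Vb" "Vb \<subseteq> vertices L d" "vb b Vb" using D_ex[OF assms(2)] by blast
  show ?thesis using that[of "Va \<union> Vb"] A B vb_mono by blast
qed

lemma Phi_add: assumes "a \<in> DD" "b \<in> DD"
  shows "Phi L d s p (a + b) = Phi L d s p a + Phi L d s p b"
proof -
  obtain V where V: "finite V" "V \<subseteq> vertices L d" "vb a V" "vb b V" using DD_common[OF assms] by blast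
  show ?thesis unfolding Phi_vb[OF V(1,2,3)] Phi_vb[OF V(1,2,4)] Phi_vb[OF V(1,2) vb_add[OF V(3,4)]]
    by (simp add: distrib_left distrib_right sum.distrib)
qed

lemma Phi_scale: assumes "a \<in> DD"
  shows "Phi L d s p (scaleC z a) = scaleC z (Phi L d s p a)"
proof -
  obtain V where V: "finite V" "V \<subseteq> vertices L d" "vb a V" using D_ex[OF assms] by blast
  show ?thesis unfolding Phi_vb[OF V] Phi_vb[OF V(1,2) vb_scale[OF V(3)]]
    by (simp add: scaleC_sum scaleC_mult_left scaleC_mult_right)
qed

lemma Phi_invol: assumes "a \<in> DD"
  shows "Phi L d s p (invol a) = invol (Phi L d s p a)"
proof -
  obtain V where V: "finite V" "V \<subseteq> vertices L d" "vb a V" using D_ex[OF assms] by blast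
  show ?thesis unfolding Phi_vb[OF V] Phi_vb[OF V(1,2) vb_invol[OF V(3)]]
    by (simp add: invol_sum invol_mult invol_invol mult.assoc)
qed

lemma Phi_diff: assumes "a \<in> DD" "b \<in> DD"
  shows "Phi L d s p (a - b) = Phi L d s p a - Phi L d s p b"
  using Phi_add[OF assms(1) D_scale[OF assms(2), where z="-1"]] Phi_scale[OF assms(2), where z="-1"]
  by (simp add: scaleC_m1)

lemma Phi_mult: assumes "a \<in> DD" "b \<in> DD"
  shows "Phi L d s p (a * b) = Phi L d s p a * Phi L d s p b"
proof -
  obtain V where V: "finite V" "V \<subseteq> vertices L d" "vb a V" "vb b V" using DD_common[OF assms] by blast
  let ?S = "Sp p V"
  have fS: "finite ?S" using finite_Sp V by blast
  have "Phi L d s p a * Phi L d s p b =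
      (\<Sum>e\<in>?S. \<Sum>f\<in>?S. (s e * a * invol (s e)) * (s f * b * invol (s f)))"
    unfolding Phi_vb[OF V(1,2,3)] Phi_vb[OF V(1,2,4)] sum_product ..
  also have "\<dots> = (\<Sum>e\<in>?S. \<Sum>f\<in>?S. if f = e then s e * (a * b) * invol (s e) else 0)"
  proof (intro sum.cong refl)
    fix e f assume e: "e \<in> ?S" and f: "f \<in> ?S"
    then have eL: "e \<in> L" "f \<in> L" "d e = p" "d f = p" "src e \<in> vertices L d"
      using V by (auto simp: Sp_def)
    have "(s e * a * invol (s e)) * (s f * b * invol (s f)) = s e * a * (invol (s e) * s f) * b * invol (s f)"
      by (simp add: mult.assoc)
    also have "\<dots> = (if f = e then s e * (a * b) * invol (s e) else 0)"
    proof (cases "f = e")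
      case True
      have "s e * a * (invol (s e) * s e) * b * invol (s e) = s e * (a * s (src e)) * b * invol (s e)"
        using star_self eL by (simp add: mult.assoc)
      also have "\<dots> = (s e * s (src e)) * a * b * invol (s e)"
        using D_comm[OF assms(1) eL(5)] by (simp add: mult.assoc)
      also have "\<dots> = s e * (a * b) * invol (s e)" using s_src eL by (simp add: mult.assoc)
      finally show ?thesis using True by simp
    next
      case False
      then show ?thesis using star_orth[of e f] eL by simp
    qed
    finally show "(s e * a * invol (s e)) * (s f * b * invol (s f)) = (if f = e then s e * (a * b) * invol (s e) else 0)" .
  qed
  also have "\<dots> = (\<Sum>e\<in>?S. s e * (a * b) * invol (s e))" using fS by simp
  also have "\<dots> = Phi L d s p (a * b)" unfolding Phi_vb[OF V(1,2) vb_mult[OF V(3,4)]] ..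
  finally show ?thesis by simp
qed

lemma Phi_norm: assumes "a \<in> DD" shows "norm (Phi L d s p a) = norm a"
proof -
  obtain V where V: "finite V" "V \<subseteq> vertices L d" "vb a V" and aV: "a = (\<Sum>v\<in>V. s v * a * s v)"
    using D_ex[OF assms] by blast
  let ?S = "Sp p V"
  have fS: "finite ?S" using finite_Sp V by blast
  have PS: "Phi L d s p a = (\<Sum>e\<in>?S. s e * a * invol (s e))" using Phi_vb[OF V] .
  have le1: "norm (Phi L d s p a) \<le> norm a"
    unfolding PS
  proof (rule orth_norm[OF fS norm_ge_zero])
    fix e assume "e \<in> ?S"
    then have eL: "e \<in> L" by (auto simp: Sp_def)
    have "norm (s e * a * invol (s e)) \<le> norm (s e * a) * norm (invol (s e))" by (rule norm_mult_ineq)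
    also have "\<dots> \<le> norm (s e) * norm a * norm (invol (s e))"
      by (intro mult_right_mono norm_mult_ineq norm_ge_zero)
    finally have "norm (s e * a * invol (s e)) \<le> norm (s e) * norm a * norm (invol (s e))" .
    also have "\<dots> \<le> 1 * norm a * 1"
      using norm_s[OF eL] norm_is[OF eL] by (intro mult_mono) auto
    finally show "norm (s e * a * invol (s e)) \<le> norm a" by simp
  next
    fix e f assume "e \<in> ?S" "f \<in> ?S" "e \<noteq> f"
    then have eL: "e \<in> L" "f \<in> L" "d e = d f" "e \<noteq> f" by (auto simp: Sp_def)
    have 0: "invol (s e) * s f = 0" "invol (s f) * s e = 0" using star_orth eL by auto
    have "invol (s e * a * invol (s e)) * (s f * a * invol (s f)) = (s e * invol a) * (invol (s e) * s f) * (a * invol (s f))"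
      by (simp add: invol_mult invol_invol mult.assoc)
    moreover have "(s e * a * invol (s e)) * invol (s f * a * invol (s f)) = (s e * a) * (invol (s e) * s f) * (invol a * invol (s f))"
      by (simp add: invol_mult invol_invol mult.assoc)
    ultimately show "invol (s e * a * invol (s e)) * (s f * a * invol (s f)) = 0 \<and>
        (s e * a * invol (s e)) * invol (s f * a * invol (s f)) = 0" using 0 by simp
  qed
  have le2: "norm a \<le> norm (Phi L d s p a)"
    apply (subst aV)
  proof (rule orth_norm[OF V(1) norm_ge_zero])
    fix v assume v: "v \<in> V"
    then have vv: "v \<in> vertices L d" using V by auto
    obtain e where e: "e \<in> L" "d e = p" "src e = v" using ne_in[OF vv, of p] by auto
    then have eS: "e \<in> ?S" using v by (auto simp: Sp_def)
    have "invol (s e) * Phi L d s p a * s e = (\<Sum>f\<in>?S. invol (s e) * (s f * a * invol (s f)) * s e)"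
      unfolding PS by (simp add: sum_distrib_left sum_distrib_right)
    also have "\<dots> = (\<Sum>f\<in>?S. if f = e then s v * a * s v else 0)"
    proof (rule sum.cong[OF refl])
      fix f assume f: "f \<in> ?S"
      then have fL: "f \<in> L" "d f = p" by (auto simp: Sp_def)
      show "invol (s e) * (s f * a * invol (s f)) * s e = (if f = e then s v * a * s v else 0)"
      proof (cases "f = e")
        case True
        have "invol (s e) * (s f * a * invol (s f)) * s e = (invol (s e) * s e) * a * (invol (s e) * s e)"
          using True by (simp add: mult.assoc)
        then show ?thesis using True star_self[OF e(1)] e by simp
      next
        case False
        then have "invol (s e) * s f = 0" using star_orth[of e f] e fL by simp
        then show ?thesis using False by (simp add: mult.assoc[symmetric])
      qed
    qed
    also have "\<dots> = s v * a * s v" using fS eS by simp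
    finally have eq: "s v * a * s v = invol (s e) * Phi L d s p a * s e" by simp
    have "norm (s v * a * s v) \<le> norm (invol (s e) * Phi L d s p a) * norm (s e)"
      unfolding eq by (rule norm_mult_ineq)
    also have "\<dots> \<le> norm (invol (s e)) * norm (Phi L d s p a) * norm (s e)"
      by (intro mult_right_mono norm_mult_ineq norm_ge_zero)
    finally have "norm (s v * a * s v) \<le> norm (invol (s e)) * norm (Phi L d s p a) * norm (s e)" .
    also have "\<dots> \<le> 1 * norm (Phi L d s p a) * 1"
      using norm_s[OF e(1)] norm_is[OF e(1)] by (intro mult_mono) auto
    finally show "norm (s v * a * s v) \<le> norm (Phi L d s p a)" by simp
  next
    fix v w assume "v \<in> V" "w \<in> V" "v \<noteq> w"
    then have vw: "v \<in> vertices L d" "w \<in> vertices L d" "v \<noteq> w" using V by auto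
    have 0: "s v * s w = 0" using ck_orth vw by simp
    have "invol (s v * a * s v) * (s w * a * s w) = (s v * invol a) * (s v * s w) * (a * s w)"
      using ck_v vw by (simp add: invol_mult invol_invol mult.assoc)
    moreover have "(s v * a * s v) * invol (s w * a * s w) = (s v * a) * (s v * s w) * (invol a * s w)"
      using ck_v vw by (simp add: invol_mult invol_invol mult.assoc)
    ultimately show "invol (s v * a * s v) * (s w * a * s w) = 0 \<and> (s v * a * s v) * invol (s w * a * s w) = 0"
      using 0 by simp
  qed
  show ?thesis using le1 le2 by simp
qed

lemma Phi_zero: assumes "a \<in> DD" shows "Phi L d s (\<lambda>_. 0) a = a"
proof -
  obtain V where V: "finite V" "V \<subseteq> vertices L d" "vb a V" and aV: "a = (\<Sum>v\<in>V. s v * a * s v)"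
    using D_ex[OF assms] by blast
  have S: "Sp (\<lambda>_. 0) V = V"
  proof
    show "Sp (\<lambda>_. 0) V \<subseteq> V"
    proof
      fix e assume "e \<in> Sp (\<lambda>_. 0) V"
      then have "e \<in> vertices L d" "src e \<in> V" by (auto simp: Sp_def vert_iff)
      then show "e \<in> V" using vert_src by metis
    qed
    show "V \<subseteq> Sp (\<lambda>_. 0) V" using V vert_src by (auto simp: Sp_def vert_iff)
  qed
  have "Phi L d s (\<lambda>_. 0) a = (\<Sum>v\<in>V. s v * a * invol (s v))" using Phi_vb[OF V] S by simp
  also have "\<dots> = (\<Sum>v\<in>V. s v * a * s v)" using V ck_v by (intro sum.cong) auto
  finally show ?thesis using aV by simp
qed

end


context kg begin

lemma Phi_comp: assumes "a \<in> DD"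
  shows "Phi L d s (\<lambda>i. p i + q i) a = Phi L d s p (Phi L d s q a)"
proof -
  obtain V where V: "finite V" "V \<subseteq> vertices L d" "vb a V" using D_ex[OF assms] by blast
  define Sq where "Sq = Sp q V"
  define W where "W = rng ` Sq"
  define g where "g z = s z * a * invol (s z)" for z
  have fSq: "finite Sq" unfolding Sq_def using finite_Sp V by blast
  have SqL: "Sq \<subseteq> L" by (auto simp: Sq_def Sp_def)
  have W: "finite W" "W \<subseteq> vertices L d" unfolding W_def using fSq SqL rng_vert by auto
  have Pq: "Phi L d s q a = (\<Sum>e\<in>Sq. s e * a * invol (s e))" unfolding Sq_def using Phi_vb[OF V] .
  have vbq: "vb (Phi L d s q a) W"
    unfolding vb_def
  proof (intro ballI impI)
    fix t assume t: "t \<in> L" "src t \<notin> W"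
    have 0: "s t * s e = 0" if "e \<in> Sq" for e
      using s_mult0[of t e] t that SqL unfolding W_def by auto
    have "s t * Phi L d s q a = (\<Sum>e\<in>Sq. (s t * s e) * a * invol (s e))"
      unfolding Pq by (simp add: sum_distrib_left mult.assoc)
    also have "\<dots> = 0" using 0 by simp
    finally have A: "s t * Phi L d s q a = 0" .
    have "Phi L d s q a * invol (s t) = (\<Sum>e\<in>Sq. s e * a * invol (s t * s e))"
      unfolding Pq by (simp add: sum_distrib_right mult.assoc invol_mult)
    also have "\<dots> = 0" using 0 by simp
    finally show "s t * Phi L d s q a = 0 \<and> Phi L d s q a * invol (s t) = 0" using A by simp
  qed
  define Sp' where "Sp' = Sp p W"
  have fSp': "finite Sp'" unfolding Sp'_def using finite_Sp W by blast
  define P where "P = {x \<in> Sp' \<times> Sq. src (fst x) = rng (snd x)}"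
  have "Phi L d s p (Phi L d s q a) = (\<Sum>t\<in>Sp'. s t * (\<Sum>e\<in>Sq. s e * a * invol (s e)) * invol (s t))"
    using Phi_vb[OF W vbq, of p] unfolding Sp'_def Pq .
  also have "\<dots> = (\<Sum>t\<in>Sp'. \<Sum>e\<in>Sq. if src t = rng e then g (cmp t e) else 0)"
  proof (rule sum.cong[OF refl])
    fix t assume t: "t \<in> Sp'"
    have "s t * (\<Sum>e\<in>Sq. s e * a * invol (s e)) * invol (s t) = (\<Sum>e\<in>Sq. s t * (s e * a * invol (s e)) * invol (s t))"
      by (simp add: sum_distrib_left sum_distrib_right)
    also have "\<dots> = (\<Sum>e\<in>Sq. if src t = rng e then g (cmp t e) else 0)"
    proof (rule sum.cong[OF refl])
      fix e assume e: "e \<in> Sq"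
      then have tL: "t \<in> L" "e \<in> L" using t SqL by (auto simp: Sp'_def Sp_def)
      have "s t * (s e * a * invol (s e)) * invol (s t) = (s t * s e) * a * invol (s t * s e)"
        by (simp add: mult.assoc invol_mult)
      also have "\<dots> = (if src t = rng e then g (cmp t e) else 0)"
        using ck_mult[OF tL] s_mult0[OF tL] by (auto simp: g_def)
      finally show "s t * (s e * a * invol (s e)) * invol (s t) = (if src t = rng e then g (cmp t e) else 0)" .
    qed
    finally show "s t * (\<Sum>e\<in>Sq. s e * a * invol (s e)) * invol (s t) = (\<Sum>e\<in>Sq. if src t = rng e then g (cmp t e) else 0)" .
  qed
  also have "\<dots> = (\<Sum>x\<in>Sp' \<times> Sq. if src (fst x) = rng (snd x) then g (cmp (fst x) (snd x)) else 0)"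
    by (simp only: sum.cartesian_product' fst_conv snd_conv)
  also have "\<dots> = (\<Sum>x\<in>P. g (cmp (fst x) (snd x)))"
    unfolding P_def using fSp' fSq by (simp add: sum.inter_filter)
  also have "\<dots> = (\<Sum>z\<in>(\<lambda>x. cmp (fst x) (snd x)) ` P. g z)"
  proof (rule sum.reindex[symmetric, unfolded comp_def])
    show "inj_on (\<lambda>x. cmp (fst x) (snd x)) P"
    proof (rule inj_onI)
      fix x y assume x: "x \<in> P" and y: "y \<in> P" and eq: "cmp (fst x) (snd x) = cmp (fst y) (snd y)"
      have "fst x = fst y \<and> snd x = snd y"
        by (rule fact_uniq) (use x y eq SqL in \<open>auto simp: P_def Sp'_def Sp_def Sq_def\<close>)
      then show "x = y" by (simp add: prod_eq_iff)
    qed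
  qed
  also have "(\<lambda>x. cmp (fst x) (snd x)) ` P = Sp (\<lambda>i. p i + q i) V"
  proof
    show "(\<lambda>x. cmp (fst x) (snd x)) ` P \<subseteq> Sp (\<lambda>i. p i + q i) V"
    proof
      fix z assume "z \<in> (\<lambda>x. cmp (fst x) (snd x)) ` P"
      then obtain t e where te: "(t, e) \<in> P" "z = cmp t e" by auto
      then have h: "t \<in> L" "e \<in> L" "src t = rng e" "d t = p" "d e = q" "src e \<in> V"
        using SqL by (auto simp: P_def Sp'_def Sp_def Sq_def)
      show "z \<in> Sp (\<lambda>i. p i + q i) V"
        unfolding Sp_def te(2) using h cmp_L d_cmp src_cmp by auto
    qed
    show "Sp (\<lambda>i. p i + q i) V \<subseteq> (\<lambda>x. cmp (fst x) (snd x)) ` P"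
    proof
      fix z assume z: "z \<in> Sp (\<lambda>i. p i + q i) V"
      then have zz: "z \<in> L" "d z = (\<lambda>i. p i + q i)" "src z \<in> V" by (auto simp: Sp_def)
      obtain t e where te: "t \<in> L" "e \<in> L" "src t = rng e" "cmp t e = z" "d t = p" "d e = q"
        using fact_ex[OF zz(1,2)] by blast
      have "src e = src z" using src_cmp te by metis
      then have eS: "e \<in> Sq" using te zz by (auto simp: Sq_def Sp_def)
      then have "t \<in> Sp'" using te unfolding Sp'_def Sp_def W_def by auto
      then have "(t, e) \<in> P" using eS te unfolding P_def by auto
      then show "z \<in> (\<lambda>x. cmp (fst x) (snd x)) ` P" using te(4) by force
    qed
  qed
  also have "(\<Sum>z\<in>Sp (\<lambda>i. p i + q i) V. g z) = Phi L d s (\<lambda>i. p i + q i) a"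
    unfolding g_def using Phi_vb[OF V] by simp
  finally show ?thesis by simp
qed

end


context kg begin

lemma Q_mult: assumes "l \<in> L" "m \<in> L" shows "Q l * Q m \<in> DD"
proof -
  let ?M = "min_ext L rng src cmp d l m"
  have "Q l * Q m = s l * (invol (s l) * s m) * invol (s m)" by (simp add: mult.assoc)
  also have "\<dots> = (\<Sum>x\<in>?M. s l * (s (fst x) * invol (s (snd x))) * invol (s m))"
    unfolding ck_star[OF assms] by (simp add: sum_distrib_left sum_distrib_right case_prod_beta)
  also have "\<dots> \<in> DD"
  proof (cases "finite ?M")
    case True
    show ?thesis
    proof (rule D_sum[OF True])
      fix x assume x: "x \<in> ?M"
      obtain xi eta where xe: "x = (xi, eta)" by force
      have h: "xi \<in> L" "eta \<in> L" "src l = rng xi" "src m = rng eta" "cmp l xi = cmp m eta"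
        using x xe unfolding min_ext_def by auto
      have "s l * (s xi * invol (s eta)) * invol (s m) = (s l * s xi) * invol (s m * s eta)"
        by (simp add: mult.assoc invol_mult)
      also have "\<dots> = Q (cmp l xi)" using ck_mult h assms by simp
      finally show "s l * (s (fst x) * invol (s (snd x))) * invol (s m) \<in> DD"
        using xe D_Q cmp_L h assms by simp
    qed
  next
    case False
    then show ?thesis using D_zero by simp
  qed
  finally show ?thesis .
qed

lemma D_mult: assumes "a \<in> DD" "b \<in> DD" shows "a * b \<in> DD"
proof -
  obtain F c where F: "finite F" "F \<subseteq> L" "a = (\<Sum>l\<in>F. scaleC (c l) (Q l))" using D_rep assms(1) by blast
  obtain G e where G: "finite G" "G \<subseteq> L" "b = (\<Sum>l\<in>G. scaleC (e l) (Q l))" using D_rep assms(2) by blast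
  have "a * b = (\<Sum>l\<in>F. \<Sum>m\<in>G. scaleC (e m) (scaleC (c l) (Q l * Q m)))"
    unfolding F(3) G(3) sum_product by (simp add: scaleC_mult_left scaleC_mult_right)
  also have "\<dots> \<in> DD"
    using F G Q_mult by (intro D_sum D_scale) auto
  finally show ?thesis .
qed

lemma Phi_uc: "uniformly_continuous_on DD (Phi L d s p)"
  unfolding uniformly_continuous_on_def
proof (intro allI impI)
  fix e :: real assume e: "e > 0"
  show "\<exists>dd>0. \<forall>x\<in>DD. \<forall>x'\<in>DD. dist x' x < dd \<longrightarrow> dist (Phi L d s p x') (Phi L d s p x) < e"
  proof (intro exI[of _ e] conjI ballI impI)
    fix x x' assume x: "x \<in> DD" "x' \<in> DD" "dist x' x < e"
    have "dist (Phi L d s p x') (Phi L d s p x) = norm (Phi L d s p (x' - x))"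
      using Phi_diff x by (simp add: dist_norm)
    also have "\<dots> = dist x' x" using Phi_norm D_diff x by (simp add: dist_norm)
    finally show "dist (Phi L d s p x') (Phi L d s p x) < e" using x by simp
  qed (use e in simp)
qed

definition Psi where
  "Psi p = (SOME g. continuous_on (closure DD) g \<and> (\<forall>x\<in>DD. g x = Phi L d s p x))"

lemma Psi: "continuous_on (closure DD) (Psi p) \<and> (\<forall>x\<in>DD. Psi p x = Phi L d s p x)"
proof -
  obtain g where "uniformly_continuous_on (closure DD) g" "\<And>x. x \<in> DD \<Longrightarrow> Phi L d s p x = g x"
    using uniformly_continuous_on_extension_on_closure[OF Phi_uc[of p]] by metis
  then have "\<exists>g. continuous_on (closure DD) g \<and> (\<forall>x\<in>DD. g x = Phi L d s p x)"
    using uniformly_continuous_imp_continuous by metis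
  then show ?thesis unfolding Psi_def by (rule someI_ex)
qed

lemma Psi_cont: "continuous_on (closure DD) (Psi p)" using Psi by blast
lemma Psi_eq: "x \<in> DD \<Longrightarrow> Psi p x = Phi L d s p x" using Psi by blast

lemma seqD: assumes "a \<in> closure DD" obtains x where "\<And>n. x n \<in> DD" "x \<longlonglongrightarrow> a"
  using assms closure_sequential by metis

lemma seq_clos: "(\<And>n. x n \<in> DD) \<Longrightarrow> x \<longlonglongrightarrow> a \<Longrightarrow> a \<in> closure DD"
  using closure_sequential by blast

lemma Psi_lim: assumes "a \<in> closure DD" "\<And>n. x n \<in> DD" "x \<longlonglongrightarrow> a"
  shows "(\<lambda>n. Phi L d s p (x n)) \<longlonglongrightarrow> Psi p a"
proof -
  have "(Psi p \<circ> x) \<longlonglongrightarrow> Psi p a"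
    using Psi_cont[of p] assms unfolding continuous_on_closure_sequentially by blast
  moreover have "(Psi p \<circ> x) = (\<lambda>n. Phi L d s p (x n))" using Psi_eq assms(2) by (auto simp: fun_eq_iff)
  ultimately show ?thesis by simp
qed

lemma Psi_image: "Psi p ` closure DD \<subseteq> closure DD"
proof (rule image_closure_subset[OF Psi_cont closed_closure])
  show "Psi p ` DD \<subseteq> closure DD" using Psi_eq Phi_DD closure_subset by fastforce
qed

lemma Psi_hom: "star_hom_on (closure DD) (Psi p)"
  unfolding star_hom_on_def
proof (intro conjI ballI allI)
  fix a b assume a: "a \<in> closure DD" and b: "b \<in> closure DD"
  obtain x where x: "\<And>n. x n \<in> DD" "x \<longlonglongrightarrow> a" using seqD a by blast
  obtain y where y: "\<And>n. y n \<in> DD" "y \<longlonglongrightarrow> b" using seqD b by blast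
  have xy1: "\<And>n. x n + y n \<in> DD" using x y D_add by blast
  have xy2: "(\<lambda>n. x n + y n) \<longlonglongrightarrow> a + b" using x y by (intro tendsto_add)
  have "(\<lambda>n. Phi L d s p (x n + y n)) \<longlonglongrightarrow> Psi p (a + b)"
    using Psi_lim[OF seq_clos[OF xy1 xy2] xy1 xy2] .
  moreover have "(\<lambda>n. Phi L d s p (x n + y n)) \<longlonglongrightarrow> Psi p a + Psi p b"
    using Phi_add x y tendsto_add[OF Psi_lim[OF a x] Psi_lim[OF b y]] by simp
  ultimately show "Psi p (a + b) = Psi p a + Psi p b" by (rule LIMSEQ_unique)
  have m1: "\<And>n. x n * y n \<in> DD" using x y D_mult by blast
  have m2: "(\<lambda>n. x n * y n) \<longlonglongrightarrow> a * b" using x y by (intro tendsto_mult)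
  have "(\<lambda>n. Phi L d s p (x n * y n)) \<longlonglongrightarrow> Psi p (a * b)"
    using Psi_lim[OF seq_clos[OF m1 m2] m1 m2] .
  moreover have "(\<lambda>n. Phi L d s p (x n * y n)) \<longlonglongrightarrow> Psi p a * Psi p b"
    using Phi_mult x y tendsto_mult[OF Psi_lim[OF a x] Psi_lim[OF b y]] by simp
  ultimately show "Psi p (a * b) = Psi p a * Psi p b" by (rule LIMSEQ_unique)
next
  fix c and a assume a: "a \<in> closure DD"
  obtain x where x: "\<And>n. x n \<in> DD" "x \<longlonglongrightarrow> a" using seqD a by blast
  have s1: "\<And>n. scaleC c (x n) \<in> DD" using x D_scale by blast
  have s2: "(\<lambda>n. scaleC c (x n)) \<longlonglongrightarrow> scaleC c a" using x bounded_linear.tendsto[OF bounded_linear_scaleC] by blast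
  have "(\<lambda>n. Phi L d s p (scaleC c (x n))) \<longlonglongrightarrow> Psi p (scaleC c a)"
    using Psi_lim[OF seq_clos[OF s1 s2] s1 s2] .
  moreover have "(\<lambda>n. Phi L d s p (scaleC c (x n))) \<longlonglongrightarrow> scaleC c (Psi p a)"
    using Phi_scale x bounded_linear.tendsto[OF bounded_linear_scaleC Psi_lim[OF a x]] by simp
  ultimately show "Psi p (scaleC c a) = scaleC c (Psi p a)" by (rule LIMSEQ_unique)
next
  fix a assume a: "a \<in> closure DD"
  obtain x where x: "\<And>n. x n \<in> DD" "x \<longlonglongrightarrow> a" using seqD a by blast
  have i1: "\<And>n. invol (x n) \<in> DD"
  proof -
    fix n
    obtain F c where F: "finite F" "F \<subseteq> L" "x n = (\<Sum>l\<in>F. scaleC (c l) (Q l))" using D_rep x(1) by blast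
    have "invol (x n) = (\<Sum>l\<in>F. scaleC (cnj (c l)) (Q l))"
      unfolding F(3) by (simp add: invol_sum invol_scaleC invol_mult invol_invol)
    also have "\<dots> \<in> DD" using F by (intro D_sum D_scale D_Q) auto
    finally show "invol (x n) \<in> DD" .
  qed
  have i2: "(\<lambda>n. invol (x n)) \<longlonglongrightarrow> invol a" using x bounded_linear.tendsto[OF bounded_linear_invol] by blast
  have "(\<lambda>n. Phi L d s p (invol (x n))) \<longlonglongrightarrow> Psi p (invol a)"
    using Psi_lim[OF seq_clos[OF i1 i2] i1 i2] .
  moreover have "(\<lambda>n. Phi L d s p (invol (x n))) \<longlonglongrightarrow> invol (Psi p a)"
    using Phi_invol x bounded_linear.tendsto[OF bounded_linear_invol Psi_lim[OF a x]] by simp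
  ultimately show "Psi p (invol a) = invol (Psi p a)" by (rule LIMSEQ_unique)
qed

lemma Psi_zero: assumes a: "a \<in> closure DD" shows "Psi (\<lambda>_. 0) a = a"
proof -
  obtain x where x: "\<And>n. x n \<in> DD" "x \<longlonglongrightarrow> a" using seqD a by blast
  have "(\<lambda>n. Phi L d s (\<lambda>_. 0) (x n)) \<longlonglongrightarrow> Psi (\<lambda>_. 0) a" using Psi_lim[OF a x] .
  moreover have "(\<lambda>n. Phi L d s (\<lambda>_. 0) (x n)) \<longlonglongrightarrow> a" using x Phi_zero by simp
  ultimately show ?thesis by (rule LIMSEQ_unique)
qed

lemma Psi_comp: assumes a: "a \<in> closure DD" shows "Psi (\<lambda>i. p i + q i) a = Psi p (Psi q a)"
proof -
  obtain x where x: "\<And>n. x n \<in> DD" "x \<longlonglongrightarrow> a" using seqD a by blast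
  have qa: "Psi q a \<in> closure DD" using Psi_image a by blast
  have y1: "\<And>n. Phi L d s q (x n) \<in> DD" using Phi_DD x by blast
  have y2: "(\<lambda>n. Phi L d s q (x n)) \<longlonglongrightarrow> Psi q a" using Psi_lim[OF a x] .
  have "(\<lambda>n. Phi L d s (\<lambda>i. p i + q i) (x n)) \<longlonglongrightarrow> Psi (\<lambda>i. p i + q i) a" using Psi_lim[OF a x] .
  moreover have "(\<lambda>n. Phi L d s (\<lambda>i. p i + q i) (x n)) \<longlonglongrightarrow> Psi p (Psi q a)"
    using Psi_lim[OF qa y1 y2] Phi_comp x by simp
  ultimately show ?thesis by (rule LIMSEQ_unique)
qed

end

theorem lemma5p1:
  fixes L :: "'m set"
    and rng src :: "'m \<Rightarrow> 'm"
    and cmp :: "'m \<Rightarrow> 'm \<Rightarrow> 'm"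
    and d :: "'m \<Rightarrow> ('k::finite \<Rightarrow> nat)"
    and s :: "'m \<Rightarrow> 'a::cstar_algebra"
  assumes "is_kgraph L rng src cmp d"
    and "locally_finite_no_sources_sinks L rng src d"
    and "universal_CK_family TYPE('b::cstar_algebra) L rng src cmp d s"
  shows "(\<forall>a\<in>diag_span L s. \<forall>p. finite {eta \<in> L. d eta = p \<and> s eta * a * invol (s eta) \<noteq> 0})
       \<and> (\<forall>a\<in>diag_span L s. \<forall>p. Phi L d s p a \<in> diag_span L s)
       \<and> (\<forall>a\<in>diag_span L s. \<forall>p. norm (Phi L d s p a) = norm a)
       \<and> (\<exists>Psi :: ('k \<Rightarrow> nat) \<Rightarrow> 'a \<Rightarrow> 'a.
            (\<forall>p. star_hom_on (closure (diag_span L s)) (Psi p)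
                 \<and> continuous_on (closure (diag_span L s)) (Psi p)
                 \<and> Psi p ` closure (diag_span L s) \<subseteq> closure (diag_span L s)
                 \<and> (\<forall>a\<in>diag_span L s. Psi p a = Phi L d s p a))
          \<and> (\<forall>a\<in>closure (diag_span L s). Psi (\<lambda>_. 0) a = a)
          \<and> (\<forall>p q. \<forall>a\<in>closure (diag_span L s). Psi (\<lambda>i. p i + q i) a = Psi p (Psi q a)))"
proof -
  have ck: "CK_family L rng src cmp d s" using assms(3) unfolding universal_CK_family_def by blast
  interpret kg L rng src cmp d s using assms(1,2) ck by unfold_locales
  show ?thesis
  proof (intro conjI ballI allI)
    show "finite {eta \<in> L. d eta = p \<and> s eta * a * invol (s eta) \<noteq> 0}" if "a \<in> diag_span L s" for a p
      using supp_finite that by blast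
    show "Phi L d s p a \<in> diag_span L s" if "a \<in> diag_span L s" for a p
      using Phi_DD that by blast
    show "norm (Phi L d s p a) = norm a" if "a \<in> diag_span L s" for a p
      using Phi_norm that by blast
    show "\<exists>Psi :: ('k \<Rightarrow> nat) \<Rightarrow> 'a \<Rightarrow> 'a.
            (\<forall>p. star_hom_on (closure (diag_span L s)) (Psi p)
                 \<and> continuous_on (closure (diag_span L s)) (Psi p)
                 \<and> Psi p ` closure (diag_span L s) \<subseteq> closure (diag_span L s)
                 \<and> (\<forall>a\<in>diag_span L s. Psi p a = Phi L d s p a))
          \<and> (\<forall>a\<in>closure (diag_span L s). Psi (\<lambda>_. 0) a = a)
          \<and> (\<forall>p q. \<forall>a\<in>closure (diag_span L s). Psi (\<lambda>i. p i + q i) a = Psi p (Psi q a))"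
      using Psi_hom Psi_cont Psi_image Psi_eq Psi_zero Psi_comp by blast
  qed
qed



end
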